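(* Assume the stream is in random order. Then with probability at least $\frac{1}{k!}$ the output $S$ of Algorithm 5 satisfies $|S|=k$.
   Context: $V$ is a finite ground set with $|V|=n$; $f:2^V\to\mathbb{R}_{\ge0}$ is monotone, submodular and normalized; $f(e\mid Y)=f(Y\cup\{e\})-f(Y)$. $k\le n$ is a positive integer and $\mathrm{OPT}=\max\{f(S):S\subseteq V,|S|\le k\}$. A stream is an ordering $e_1,\dots,e_n$ of $V$; "random order" means a uniformly random permutation. Algorithm 5 (knows $\mathrm{OPT}$): start with $S=\emptyset$; for $i=1,\dots,n$, add $e_i$ to $S$ if $|S|<k$ and $f(e_i\mid S)\ge\frac{\mathrm{OPT}-f(S)}{k}$; return $S$. *)

theory Defs
  imports "HOL-Probability.Probability" "HOL-Combinatorics.Multiset_Permutations"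
begin

definition monotone_set_fn :: "'a set \<Rightarrow> ('a set \<Rightarrow> real) \<Rightarrow> bool" where
  "monotone_set_fn V f \<longleftrightarrow> (\<forall>A B. A \<subseteq> B \<and> B \<subseteq> V \<longrightarrow> f A \<le> f B)"

definition marginal :: "('a set \<Rightarrow> real) \<Rightarrow> 'a \<Rightarrow> 'a set \<Rightarrow> real" where
  "marginal f e Y = f (Y \<union> {e}) - f Y"

definition submodular :: "'a set \<Rightarrow> ('a set \<Rightarrow> real) \<Rightarrow> bool" where
  "submodular V f \<longleftrightarrow>
     (\<forall>A B e. A \<subseteq> B \<and> B \<subseteq> V \<and> e \<in> V - B \<longrightarrow> marginal f e B \<le> marginal f e A)"

definition OPT :: "'a set \<Rightarrow> ('a set \<Rightarrow> real) \<Rightarrow> nat \<Rightarrow> real" where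
  "OPT V f k = Max {f S | S. S \<subseteq> V \<and> card S \<le> k}"

definition alg5_step :: "('a set \<Rightarrow> real) \<Rightarrow> nat \<Rightarrow> real \<Rightarrow> 'a set \<Rightarrow> 'a \<Rightarrow> 'a set" where
  "alg5_step f k opt S e =
     (if card S < k \<and> marginal f e S \<ge> (opt - f S) / real k then insert e S else S)"

definition alg5 :: "('a set \<Rightarrow> real) \<Rightarrow> nat \<Rightarrow> real \<Rightarrow> 'a list \<Rightarrow> 'a set" where
  "alg5 f k opt stream = foldl (alg5_step f k opt) {} stream"

end

theory Submission
  imports Defs
begin

lemma mono_le: "monotone_set_fn V f \<Longrightarrow> A \<subseteq> B \<Longrightarrow> B \<subseteq> V \<Longrightarrow> f A \<le> f B"
  unfolding monotone_set_fn_def by simp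

lemma bij_upd:
  assumes "bij_betw g X (A - {a})" "x \<notin> X" "a \<in> A"
  shows "bij_betw (g(x := a)) (insert x X) A"
proof -
  have "bij_betw (g(x := a)) X (A - {a})"
    using assms(1) by (rule bij_betw_cong[THEN iffD1, rotated]) (use assms(2) in auto)
  then have "bij_betw (g(x := a)) (X \<union> {x}) ((A - {a}) \<union> {(g(x := a)) x})"
    using notIn_Un_bij_betw3[of x X "g(x := a)" "A - {a}"] assms(2) by simp
  moreover have "(A - {a}) \<union> {(g(x := a)) x} = A" using assms(3) by auto
  ultimately show ?thesis by simp
qed

lemma telescope:
  assumes fin: "finite D" and sub: "submodular V f" and SV: "S \<subseteq> V" and DV: "D \<subseteq> V - S"
  shows "f (S \<union> D) - f S \<le> (\<Sum>e\<in>D. marginal f e S)"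
  using fin DV
proof (induction D rule: finite_induct)
  case empty then show ?case by simp
next
  case (insert e D)
  have "marginal f e (S \<union> D) \<le> marginal f e S"
  proof -
    have "S \<subseteq> S \<union> D" by simp
    moreover have "S \<union> D \<subseteq> V" using insert.prems SV by auto
    moreover have "e \<in> V - (S \<union> D)" using insert.prems insert.hyps(2) by auto
    ultimately show ?thesis using sub unfolding submodular_def by simp
  qed
  moreover have "f (S \<union> insert e D) = f (S \<union> D \<union> {e})"
    by (simp add: insert_commute)
  ultimately show ?case using insert unfolding marginal_def by simp
qed

lemma key:
  assumes finV: "finite V" and mono: "monotone_set_fn V f" and sub: "submodular V f"
    and OV: "Ob \<subseteq> V" and cO: "card Ob = k" and fO: "f Ob = opt" and kpos: "0 < k"
    and SV: "S \<subseteq> V" and AO: "A \<subseteq> Ob" and OAS: "Ob - A \<subseteq> S" and Ane: "A \<noteq> {}"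
  shows "\<exists>a\<in>A. marginal f a S \<ge> (opt - f S) / real k"
proof (cases "f S \<ge> opt")
  case True
  obtain a where a: "a \<in> A" using Ane by auto
  have "S \<union> {a} \<subseteq> V" using a AO OV SV by auto
  then have "f S \<le> f (S \<union> {a})" using mono_le[OF mono, of S "S \<union> {a}"] by auto
  then have "marginal f a S \<ge> 0" unfolding marginal_def by simp
  moreover have "(opt - f S) / real k \<le> 0" using True kpos by (simp add: divide_nonpos_pos)
  ultimately have "marginal f a S \<ge> (opt - f S) / real k" by linarith
  then show ?thesis using a by blast
next
  case False
  define D where "D = Ob - S"
  have finO: "finite Ob" by (rule finite_subset[OF OV finV])
  have finD: "finite D" unfolding D_def using finO by simp
  have DA: "D \<subseteq> A" using OAS D_def by auto
  have SD: "S \<union> D = S \<union> Ob" using D_def by auto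
  have "f Ob \<le> f (S \<union> Ob)" by (rule mono_le[OF mono]) (use OV SV in auto)
  moreover have "f (S \<union> D) - f S \<le> (\<Sum>e\<in>D. marginal f e S)"
    by (rule telescope[OF finD sub SV]) (use D_def OV in auto)
  ultimately have ge: "(\<Sum>e\<in>D. marginal f e S) \<ge> opt - f S"
    using SD fO by (simp only:)
  have Dne: "D \<noteq> {}"
  proof
    assume "D = {}"
    then have "Ob \<subseteq> S" using D_def by auto
    then have "f Ob \<le> f S" by (rule mono_le[OF mono]) (use SV in auto)
    then show False using False fO by simp
  qed
  have "card D \<le> card Ob" unfolding D_def using finO by (intro card_mono) auto
  then have cD: "card D \<le> k" using cO by simp
  have cDpos: "card D > 0" using Dne finD by (simp add: card_gt_0_iff)
  have "\<exists>e\<in>D. marginal f e S \<ge> (opt - f S) / real (card D)"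
  proof (rule ccontr)
    assume "\<not> ?thesis"
    then have "\<forall>e\<in>D. marginal f e S < (opt - f S) / real (card D)" by auto
    then have "(\<Sum>e\<in>D. marginal f e S) < (\<Sum>e\<in>D. (opt - f S) / real (card D))"
      by (intro sum_strict_mono[OF finD Dne]) simp
    also have "\<dots> = opt - f S" using cDpos by simp
    finally show False using ge by simp
  qed
  then obtain e where e: "e \<in> D" "marginal f e S \<ge> (opt - f S) / real (card D)" by auto
  have "(opt - f S) / real k \<le> (opt - f S) / real (card D)"
  proof (rule divide_left_mono)
    show "real (card D) \<le> real k" using cD by simp
    show "0 \<le> opt - f S" using False by simp
    show "0 < real k * real (card D)" using kpos cDpos by simp
  qed
  then have "marginal f e S \<ge> (opt - f S) / real k" using e by linarith
  then show ?thesis using e DA by blast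
qed

lemma main_ind:
  assumes finV: "finite V" and mono: "monotone_set_fn V f" and sub: "submodular V f"
    and OV: "Ob \<subseteq> V" and cO: "card Ob = k" and fO: "f Ob = opt" and kpos: "0 < k"
  shows "distinct xs \<Longrightarrow> set xs \<subseteq> V \<Longrightarrow> A \<subseteq> Ob \<Longrightarrow> card (set xs \<inter> Ob) = card A
    \<Longrightarrow> S \<subseteq> V \<Longrightarrow> card S \<le> k \<Longrightarrow> (card S = k \<or> Ob - A \<subseteq> S)
    \<Longrightarrow> \<exists>g. bij_betw g (set xs \<inter> Ob) A \<and>
         card (foldl (alg5_step f k opt) S (map (\<lambda>y. if y \<in> Ob then g y else y) xs)) = k"
proof (induction xs arbitrary: A S)
  case Nil
  have finO: "finite Ob" using finV OV finite_subset by auto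
  have "finite A" using Nil(3) finO by (rule finite_subset)
  then have "A = {}" using Nil(4) by simp
  have finS: "finite S" using Nil finV finite_subset by auto
  have "card S = k"
  proof (cases "card S = k")
    case False
    then have "Ob \<subseteq> S" using Nil \<open>A = {}\<close> by auto
    then have "card Ob \<le> card S" using finS card_mono by auto
    then show ?thesis using Nil cO by simp
  qed
  then show ?case using \<open>A = {}\<close> by (auto simp: bij_betw_def)
next
  case (Cons x xs)
  have finO: "finite Ob" using finV OV finite_subset by auto
  have finS: "finite S" using Cons.prems finV finite_subset by auto
  show ?case
  proof (cases "x \<in> Ob")
    case False
    define S' where "S' = alg5_step f k opt S x"
    have S'V: "S' \<subseteq> V" using Cons.prems S'_def by (auto simp: alg5_step_def)
    have cS': "card S' \<le> k" using Cons.prems S'_def finS by (auto simp: alg5_step_def card_insert_if)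
    have inv: "card S' = k \<or> Ob - A \<subseteq> S'" using Cons.prems S'_def by (auto simp: alg5_step_def)
    have "set (x # xs) \<inter> Ob = set xs \<inter> Ob" using False by auto
    then obtain g where g: "bij_betw g (set xs \<inter> Ob) A"
      "card (foldl (alg5_step f k opt) S' (map (\<lambda>y. if y \<in> Ob then g y else y) xs)) = k"
      using Cons.IH[of A S'] Cons.prems S'V cS' inv by auto
    show ?thesis using g False \<open>set (x # xs) \<inter> Ob = set xs \<inter> Ob\<close> S'_def by (intro exI[of _ g]) auto
  next
    case True
    have finA: "finite A" using Cons.prems finO finite_subset by auto
    have "set (x # xs) \<inter> Ob = insert x (set xs \<inter> Ob)" using True by auto
    moreover have "x \<notin> set xs \<inter> Ob" using Cons.prems by auto
    ultimately have cardxs: "card (set xs \<inter> Ob) + 1 = card A"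
      using Cons.prems(4) by (simp add: card_insert_disjoint)
    then have Ane: "A \<noteq> {}" by auto
    have "\<exists>a\<in>A. card (alg5_step f k opt S a) \<le> k \<and> alg5_step f k opt S a \<subseteq> V \<and>
        (card (alg5_step f k opt S a) = k \<or> Ob - (A - {a}) \<subseteq> alg5_step f k opt S a)"
    proof (cases "card S = k")
      case True
      then obtain a where "a \<in> A" using Ane by auto
      then show ?thesis using True Cons.prems by (intro bexI[of _ a]) (auto simp: alg5_step_def)
    next
      case False
      then have "Ob - A \<subseteq> S" "card S < k" using Cons.prems by auto
      then obtain a where a: "a \<in> A" "marginal f a S \<ge> (opt - f S) / real k"
        using key[OF finV mono sub OV cO fO kpos _ _ _ Ane, of S] Cons.prems by auto
      then have st: "alg5_step f k opt S a = insert a S" using \<open>card S < k\<close> by (simp add: alg5_step_def)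
      have "card (insert a S) \<le> k" using \<open>card S < k\<close> finS by (simp add: card_insert_if)
      moreover have "insert a S \<subseteq> V" using a Cons.prems OV by auto
      moreover have "Ob - (A - {a}) \<subseteq> insert a S" using \<open>Ob - A \<subseteq> S\<close> by auto
      ultimately show ?thesis using a(1) st by (intro bexI[of _ a]) simp_all
    qed
    then obtain a where a: "a \<in> A" "card (alg5_step f k opt S a) \<le> k" "alg5_step f k opt S a \<subseteq> V"
        "card (alg5_step f k opt S a) = k \<or> Ob - (A - {a}) \<subseteq> alg5_step f k opt S a" by blast
    have "card (A - {a}) = card (set xs \<inter> Ob)" using cardxs a(1) finA by simp
    then obtain g where g: "bij_betw g (set xs \<inter> Ob) (A - {a})"
      "card (foldl (alg5_step f k opt) (alg5_step f k opt S a) (map (\<lambda>y. if y \<in> Ob then g y else y) xs)) = k"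
      using Cons.IH[of "A - {a}" "alg5_step f k opt S a"] Cons.prems a by auto
    define g' where "g' = g(x := a)"
    have b: "bij_betw g' (set (x # xs) \<inter> Ob) A"
      unfolding g'_def using bij_upd[OF g(1) \<open>x \<notin> set xs \<inter> Ob\<close> a(1)] \<open>set (x # xs) \<inter> Ob = insert x (set xs \<inter> Ob)\<close>
      by simp
    have m: "map (\<lambda>y. if y \<in> Ob then g' y else y) xs = map (\<lambda>y. if y \<in> Ob then g y else y) xs"
      using Cons.prems(1) unfolding g'_def by (intro map_cong) auto
    have gx: "g' x = a" unfolding g'_def by simp
    show ?thesis using b g(2) True by (intro exI[of _ g']) (simp add: m gx)
  qed
qed

theorem mainTheorem13:
  fixes V :: "'a set" and f :: "'a set \<Rightarrow> real" and k :: nat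
  assumes "finite V"
    and "\<forall>S \<subseteq> V. f S \<ge> 0"
    and "monotone_set_fn V f"
    and "submodular V f"
    and "f {} = 0"
    and "0 < k" and "k \<le> card V"
  shows "measure_pmf.prob (pmf_of_set (permutations_of_set V))
           {stream. card (alg5 f k (OPT V f k) stream) = k} \<ge> 1 / fact k"
proof -
  note finV = assms(1) and mono = assms(3) and sub = assms(4) and kpos = assms(6)
  define opt where "opt = OPT V f k"
  define F where "F = {f S | S. S \<subseteq> V \<and> card S \<le> k}"
  have finF: "finite F" unfolding F_def using finV by simp
  have "f {} \<in> F" unfolding F_def by auto
  then have "Max F \<in> F" using finF by (intro Max_in) auto
  then obtain S0 where S0: "S0 \<subseteq> V" "card S0 \<le> k" "f S0 = opt"
    unfolding F_def opt_def OPT_def by auto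
  have finS0: "finite S0" by (rule finite_subset[OF S0(1) finV])
  have "k - card S0 \<le> card (V - S0)" using assms(7) S0 finS0 by (simp add: card_Diff_subset)
  then obtain T where T: "T \<subseteq> V - S0" "card T = k - card S0" "finite T"
    by (rule obtain_subset_with_card_n)
  define Ob where "Ob = S0 \<union> T"
  have OV: "Ob \<subseteq> V" using T S0 Ob_def by auto
  have cO: "card Ob = k" unfolding Ob_def using T S0 finS0
    by (subst card_Un_disjoint) auto
  have "f S0 \<le> f Ob" by (rule mono_le[OF mono]) (use OV Ob_def in auto)
  moreover have "f Ob \<le> opt" unfolding opt_def OPT_def
    using finF F_def OV cO by (intro Max_ge) auto
  ultimately have fO: "f Ob = opt" using S0 by simp
  have finO: "finite Ob" by (rule finite_subset[OF OV finV])
  define P where "P = permutations_of_set V"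
  define G where "G = {\<pi>\<in>P. card (alg5 f k opt \<pi>) = k}"
  define Pm where "Pm = {\<sigma>. \<sigma> permutes Ob}"
  have finP: "finite P" unfolding P_def using finV by simp
  have finG: "finite G" using finP G_def by simp
  have finPm: "finite Pm" unfolding Pm_def using finO by (simp add: finite_permutations)
  have cPm: "card Pm = fact k" unfolding Pm_def using card_permutations[OF cO finO] .
  have cP: "card P = fact (card V)" unfolding P_def using card_permutations_of_set[OF finV] .
  have cover: "P \<subseteq> (\<Union>\<sigma>\<in>Pm. {\<pi>\<in>P. map \<sigma> \<pi> \<in> G})"
  proof
    fix \<pi> assume pi: "\<pi> \<in> P"
    then have d: "distinct \<pi>" "set \<pi> = V" unfolding P_def by (auto simp: permutations_of_set_def)
    have cap: "set \<pi> \<inter> Ob = Ob" using d OV by auto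
    obtain g where g: "bij_betw g (set \<pi> \<inter> Ob) Ob"
      "card (foldl (alg5_step f k opt) {} (map (\<lambda>y. if y \<in> Ob then g y else y) \<pi>)) = k"
      using main_ind[OF finV mono sub OV cO fO kpos, of \<pi> Ob "{}"] d cap kpos by auto
    define \<sigma> where "\<sigma> = (\<lambda>y. if y \<in> Ob then g y else y)"
    have gb: "bij_betw g Ob Ob" using g(1) cap by simp
    have "bij_betw \<sigma> Ob Ob" using gb bij_betw_cong[of Ob \<sigma> g Ob] unfolding \<sigma>_def by simp
    then have "\<sigma> permutes Ob" by (rule bij_imp_permutes) (simp add: \<sigma>_def)
    then have sV: "\<sigma> permutes V" using OV by (rule permutes_subset)
    have "map \<sigma> \<pi> \<in> map \<sigma> ` P" using pi by (rule imageI)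
    then have mP: "map \<sigma> \<pi> \<in> P" unfolding P_def using permutations_of_set_image_permutes[OF sV] by simp
    have "map \<sigma> \<pi> \<in> G" unfolding G_def alg5_def using mP g(2) by (simp add: \<sigma>_def)
    then have "\<pi> \<in> {\<pi>\<in>P. map \<sigma> \<pi> \<in> G}" using pi by simp
    moreover have "\<sigma> \<in> Pm" unfolding Pm_def using \<open>\<sigma> permutes Ob\<close> by simp
    ultimately show "\<pi> \<in> (\<Union>\<sigma>\<in>Pm. {\<pi>\<in>P. map \<sigma> \<pi> \<in> G})" by (rule UN_I[rotated])
  qed
  have each: "card {\<pi>\<in>P. map \<sigma> \<pi> \<in> G} \<le> card G" if "\<sigma> \<in> Pm" for \<sigma>
  proof -
    have "inj \<sigma>" using that unfolding Pm_def by (simp add: permutes_inj)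
    then have "inj (map \<sigma>)" by (rule inj_mapI)
    then have "inj_on (map \<sigma>) {\<pi>\<in>P. map \<sigma> \<pi> \<in> G}" by (rule inj_on_subset) simp
    moreover have "map \<sigma> ` {\<pi>\<in>P. map \<sigma> \<pi> \<in> G} \<subseteq> G" by auto
    ultimately show ?thesis using finG by (rule card_inj_on_le)
  qed
  have "card P \<le> card (\<Union>\<sigma>\<in>Pm. {\<pi>\<in>P. map \<sigma> \<pi> \<in> G})"
    using cover finPm finP by (intro card_mono) auto
  also have "\<dots> \<le> (\<Sum>\<sigma>\<in>Pm. card {\<pi>\<in>P. map \<sigma> \<pi> \<in> G})" by (rule card_UN_le[OF finPm])
  also have "\<dots> \<le> (\<Sum>\<sigma>\<in>Pm. card G)" by (rule sum_mono) (rule each)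
  also have "\<dots> = fact k * card G" using cPm by simp
  finally have "real (card P) \<le> real (fact k * card G)" by (simp only: of_nat_le_iff)
  then have ineq: "real (card P) \<le> fact k * real (card G)" by (simp only: of_nat_mult of_nat_fact)
  have Pne: "P \<noteq> {}" using cP by auto
  have "measure_pmf.prob (pmf_of_set P) {stream. card (alg5 f k opt stream) = k}
      = real (card G) / real (card P)"
    using measure_pmf_of_set[OF Pne finP] unfolding G_def by (simp add: Int_def)
  moreover have "1 / fact k \<le> real (card G) / real (card P)"
    using ineq Pne finP by (simp add: field_simps card_gt_0_iff)
  ultimately show ?thesis unfolding P_def opt_def by simp
qed

end
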